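(* Let $G$, $P$, $w$ be as in the context, and let $s,t\in V$, $s\neq t$, be such that there is at least one directed path from $s$ to $t$ in $G$. Let $U_s^{\{t,\overline{o}\}}(\alpha)$ be the avoidance hitting cost in the evaporating network $G_\alpha$ (avoided set $B=\emptyset$). Then: (a) $\lim_{\alpha\to 0^+}U_s^{\{t,\overline{o}\}}(\alpha)=L_{st}$, the shortest-path distance from $s$ to $t$ in $G$; (b) if moreover $t$ is reachable from every node reachable from $s$, then at $\alpha=1$, $U_s^{\{t,\overline{o}\}}(1)$ equals the classical hitting cost $U_s^{t}$ of the random walk with transition matrix $P$ on $G$ from $s$ to $t$ (and $U_s^{\{t,\overline{o}\}}(\alpha)\to U_s^t$ as $\alpha\to1^-$); (c) if $0<\alpha_1<\alpha_2\le 1$, then $U_s^{\{t,\overline{o}\}}(\alpha_1)\le U_s^{\{t,\overline{o}\}}(\alpha_2)$.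
   Context: $G=(V,E)$ is a finite directed graph with $n$ nodes; each edge $e_{ij}\in E$ has a positive cost (weight) $w_{ij}$. $P$ is a row-stochastic $n\times n$ transition matrix with $P_{ij}>0$ if and only if $e_{ij}\in E$. $L_{st}$ denotes the minimum total cost of a directed path from $s$ to $t$. Evaporating network: for $\alpha\in(0,1]$, $G_\alpha$ is the Markov chain on $V\cup\{o\}$ ($o$ a new node) with $P_{ij}(\alpha)=P_{ij}\alpha^{w_{ij}}$ for $i,j\in V$, $P_{io}(\alpha)=1-\sum_{j}P_{ij}\alpha^{w_{ij}}$ for $i\in V$, $P_{oo}(\alpha)=1$, $P_{oj}(\alpha)=0$ for $j\neq o$. Avoidance metrics: for a target $t\in V$ and an avoided set $B\subseteq V\setminus\{t\}$, make $t$, $o$ and all nodes of $B$ absorbing in $G_\alpha$; let $\mathcal T=V\setminus(\{t\}\cup B)$. Let $Q_x=Q_x^{\{t,\overline{B\cup\{o\}}\}}(\alpha)$ be the probability that the chain started at $x$ is absorbed at $t$ (so $Q_t=1$, $Q_o=0$, $Q_b=0$ for $b\in B$). Let $F^{\{t\}\cup B\cup\{o\}}(\alpha)=(I-P(\alpha)_{\mathcal T\mathcal T})^{-1}$. For $s,m\in\mathcal T$ with $Q_s>0$, the avoidance fundamental matrix is $F_{sm}^{\{t,\overline{B\cup\{o\}}\}}(\alpha)=F^{\{t\}\cup B\cup\{o\}}_{sm}(\alpha)\,Q_m/Q_s$, and the avoidance hitting cost is $U_s^{\{t,\overline{B\cup\{o\}}\}}(\alpha)=\sum_{m\in\mathcal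 T}F_{sm}^{\{t,\overline{B\cup\{o\}}\}}(\alpha)\,r_m$ with $r_m=\sum_{i:\,e_{mi}\in E}P_{mi}(\alpha)w_{mi}\,Q_i/Q_m$ (terms with $Q_m=0$ omitted). Equivalently, it is the expected total edge cost of the walk from $s$ until absorption, conditioned on being absorbed at $t$. When $B=\emptyset$ these are written $F^{\{t,\overline o\}}$, $U^{\{t,\overline o\}}$, $Q^{\{t,\overline o\}}$. The classical hitting cost $U_s^t$ is the expected total edge cost incurred by the random walk with transition matrix $P$ on $G$ started at $s$ before first hitting $t$. *)

theory Defs
  imports "HOL-Analysis.Analysis"
begin

(* Nodes of G are the elements of a finite type 'a (V = UNIV).
   P :: 'a => 'a => real is the transition matrix, w the edge weights,
   E the edge relation.  A walk is a nonempty vertex list. *)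

fun evap_walk_prob :: "('a \<Rightarrow> 'a \<Rightarrow> real) \<Rightarrow> ('a \<Rightarrow> 'a \<Rightarrow> real) \<Rightarrow> real \<Rightarrow> 'a list \<Rightarrow> real" where
  "evap_walk_prob P w \<alpha> (x # y # ys) = P x y * \<alpha> powr (w x y) * evap_walk_prob P w \<alpha> (y # ys)"
| "evap_walk_prob P w \<alpha> _ = 1"

fun walk_prob :: "('a \<Rightarrow> 'a \<Rightarrow> real) \<Rightarrow> 'a list \<Rightarrow> real" where
  "walk_prob P (x # y # ys) = P x y * walk_prob P (y # ys)"
| "walk_prob P _ = 1"

fun walk_cost :: "('a \<Rightarrow> 'a \<Rightarrow> real) \<Rightarrow> 'a list \<Rightarrow> real" where
  "walk_cost w (x # y # ys) = w x y + walk_cost w (y # ys)"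
| "walk_cost w _ = 0"

definition absorb_walks :: "'a set \<Rightarrow> 'a \<Rightarrow> 'a \<Rightarrow> 'a list set" where
  "absorb_walks B t s = {xs. 2 \<le> length xs \<and> hd xs = s \<and> last xs = t \<and>
      (\<forall>x\<in>set (butlast xs). x \<noteq> t \<and> x \<notin> B)}"

definition avoid_absorb_prob ::
  "('a \<Rightarrow> 'a \<Rightarrow> real) \<Rightarrow> ('a \<Rightarrow> 'a \<Rightarrow> real) \<Rightarrow> real \<Rightarrow> 'a \<Rightarrow> 'a set \<Rightarrow> 'a \<Rightarrow> real" where
  "avoid_absorb_prob P w \<alpha> t B s = infsum (evap_walk_prob P w \<alpha>) (absorb_walks B t s)"

text \<open>Avoidance hitting cost U_s^{t, not(B \<union> {o})}(alpha): expected total edge cost of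
  the walk in G_alpha from s until absorption, conditioned on absorption at t.\<close>
definition avoid_hitting_cost ::
  "('a \<Rightarrow> 'a \<Rightarrow> real) \<Rightarrow> ('a \<Rightarrow> 'a \<Rightarrow> real) \<Rightarrow> real \<Rightarrow> 'a \<Rightarrow> 'a set \<Rightarrow> 'a \<Rightarrow> real" where
  "avoid_hitting_cost P w \<alpha> t B s =
     infsum (\<lambda>xs. evap_walk_prob P w \<alpha> xs * walk_cost w xs) (absorb_walks B t s)
       / avoid_absorb_prob P w \<alpha> t B s"

text \<open>Classical hitting cost U_s^t: expected total edge cost of the walk with
  transition matrix P from s up to the first visit of t (sum over first-passage walks).\<close>
definition hitting_cost :: "('a \<Rightarrow> 'a \<Rightarrow> real) \<Rightarrow> ('a \<Rightarrow> 'a \<Rightarrow> real) \<Rightarrow> 'a \<Rightarrow> 'a \<Rightarrow> real" where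
  "hitting_cost P w t s =
     infsum (\<lambda>xs. walk_prob P xs * walk_cost w xs) (absorb_walks {} t s)"

definition is_dpath :: "('a \<times> 'a) set \<Rightarrow> 'a list \<Rightarrow> 'a \<Rightarrow> 'a \<Rightarrow> bool" where
  "is_dpath E xs s t \<longleftrightarrow> xs \<noteq> [] \<and> hd xs = s \<and> last xs = t \<and>
      (\<forall>i. Suc i < length xs \<longrightarrow> (xs ! i, xs ! Suc i) \<in> E)"

definition shortest_dist :: "('a \<times> 'a) set \<Rightarrow> ('a \<Rightarrow> 'a \<Rightarrow> real) \<Rightarrow> 'a \<Rightarrow> 'a \<Rightarrow> real" where
  "shortest_dist E w s t = Min (walk_cost w ` {xs. is_dpath E xs s t \<and> distinct xs})"

end

theory Submission
  imports Defs
begin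

fun eok :: "('a \<times> 'a) set \<Rightarrow> 'a list \<Rightarrow> bool" where
  "eok E (x # y # ys) = ((x, y) \<in> E \<and> eok E (y # ys))"
| "eok E _ = True"

lemma eok_iff: "eok E xs \<longleftrightarrow> (\<forall>i. Suc i < length xs \<longrightarrow> (xs ! i, xs ! Suc i) \<in> E)"
proof (induction E xs rule: eok.induct)
  case (1 E x y ys)
  show ?case
  proof
    assume h: "eok E (x # y # ys)"
    show "\<forall>i. Suc i < length (x # y # ys) \<longrightarrow> ((x # y # ys) ! i, (x # y # ys) ! Suc i) \<in> E"
    proof (intro allI impI)
      fix i assume "Suc i < length (x # y # ys)"
      then show "((x # y # ys) ! i, (x # y # ys) ! Suc i) \<in> E"
        using h 1 by (cases i) auto
    qed
  next
    assume h: "\<forall>i. Suc i < length (x # y # ys) \<longrightarrow> ((x # y # ys) ! i, (x # y # ys) ! Suc i) \<in> E"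
    have "(x, y) \<in> E" using h[rule_format, of 0] by simp
    moreover have "\<forall>i. Suc i < length (y # ys) \<longrightarrow> ((y # ys) ! i, (y # ys) ! Suc i) \<in> E"
      using h by (metis Suc_less_eq length_Cons nth_Cons_Suc)
    ultimately show "eok E (x # y # ys)" using 1 by simp
  qed
qed auto

lemma eok_append: "eok E (xs @ y # ys) \<longleftrightarrow> eok E (xs @ [y]) \<and> eok E (y # ys)"
  by (induction xs rule: induct_list012) auto

lemma cost_append: "walk_cost w (xs @ y # ys) = walk_cost w (xs @ [y]) + walk_cost w (y # ys)"
  by (induction xs rule: induct_list012) auto

lemma cost_nonneg:
  assumes wnn: "\<And>i j. (i, j) \<in> E \<Longrightarrow> w i j \<ge> 0"
  shows "eok E zs \<Longrightarrow> walk_cost w zs \<ge> 0"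
  by (induction zs rule: induct_list012) (auto intro: add_nonneg_nonneg wnn)

lemma shortcut:
  assumes wnn: "\<And>i j. (i, j) \<in> E \<Longrightarrow> w i j \<ge> 0"
  shows "eok E xs \<Longrightarrow> xs \<noteq> [] \<Longrightarrow> \<exists>ys. eok E ys \<and> ys \<noteq> [] \<and> hd ys = hd xs \<and> last ys = last xs
           \<and> distinct ys \<and> walk_cost w ys \<le> walk_cost w xs"
proof (induction "length xs" arbitrary: xs rule: less_induct)
  case less
  show ?case
  proof (cases "distinct xs")
    case True then show ?thesis using less.prems by auto
  next
    case False
    then obtain as v bs cs where xs: "xs = as @ [v] @ bs @ [v] @ cs"
      using not_distinct_decomp by blast
    define xs' where "xs' = as @ v # cs"
    have len: "length xs' < length xs" using xs xs'_def by simp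
    have e1: "eok E (as @ [v])" and e2: "eok E (v # bs @ v # cs)"
      using less.prems(1) xs eok_append[of E as v "bs @ v # cs"] by auto
    have e3: "eok E (v # bs @ [v])" and e4: "eok E (v # cs)"
      using e2 eok_append[of E "v # bs" v cs] by auto
    have eok': "eok E xs'" using e1 e4 eok_append[of E as v cs] xs'_def by simp
    have cnn: "\<And>zs. eok E zs \<Longrightarrow> walk_cost w zs \<ge> 0"
      using cost_nonneg wnn by blast
    have "walk_cost w xs = walk_cost w (as @ [v]) + walk_cost w (v # bs @ [v]) + walk_cost w (v # cs)"
      using xs cost_append[of w as v "bs @ v # cs"] cost_append[of w "v # bs" v cs] by simp
    moreover have "walk_cost w xs' = walk_cost w (as @ [v]) + walk_cost w (v # cs)"
      using xs'_def cost_append by metis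
    ultimately have cle: "walk_cost w xs' \<le> walk_cost w xs" using cnn[OF e3] by simp
    have "hd xs' = hd xs" "last xs' = last xs" "xs' \<noteq> []"
      using xs xs'_def by (auto simp: hd_append)
    then show ?thesis using less.hyps[OF len eok'] cle by force
  qed
qed

lemma walk_prob_nonneg: "(\<And>i j. M i j \<ge> 0) \<Longrightarrow> walk_prob M xs \<ge> 0"
  by (induction M xs rule: walk_prob.induct) auto

lemma walk_prob_pos_iff:
  assumes "\<And>i j. M i j \<ge> 0" "\<And>i j. M i j > 0 \<longleftrightarrow> (i, j) \<in> E"
  shows "walk_prob M xs > 0 \<longleftrightarrow> eok E xs"
proof (induction xs rule: induct_list012)
  case (3 x y zs)
  have "walk_prob M (y # zs) \<ge> 0" using walk_prob_nonneg assms(1) by blast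
  then show ?case using 3 assms by (simp add: zero_less_mult_iff)
qed auto

lemma evap_eq: "evap_walk_prob P w \<alpha> xs = walk_prob (\<lambda>x y. P x y * \<alpha> powr w x y) xs"
  by (induction P w \<alpha> xs rule: evap_walk_prob.induct) auto

lemma walk_prob_powr:
  assumes "\<alpha> > 0"
  shows "walk_prob (\<lambda>x y. P x y * \<alpha> powr w x y) xs = walk_prob P xs * \<alpha> powr walk_cost w xs"
  using assms by (induction xs rule: induct_list012) (auto simp: powr_add)

fun lay :: "('a \<Rightarrow> 'a \<Rightarrow> real) \<Rightarrow> 'a \<Rightarrow> nat \<Rightarrow> 'a \<Rightarrow> real" where
  "lay M t 0 x = (if x = t then 0 else M x t)"
| "lay M t (Suc n) x = (if x = t then 0 else (\<Sum>y\<in>UNIV. M x y * lay M t n y))"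

fun sv :: "('a \<Rightarrow> 'a \<Rightarrow> real) \<Rightarrow> 'a set \<Rightarrow> nat \<Rightarrow> 'a \<Rightarrow> real" where
  "sv M G 0 x = (if x \<in> G then 1 else 0)"
| "sv M G (Suc n) x = (if x \<in> G then (\<Sum>y\<in>UNIV. M x y * sv M G n y) else 0)"

locale evnet =
  fixes P w :: "'a::finite \<Rightarrow> 'a \<Rightarrow> real" and E :: "('a \<times> 'a) set" and s t :: 'a
  assumes P_nonneg: "\<And>i j. P i j \<ge> 0" and P_stoch: "\<And>i. (\<Sum>j\<in>UNIV. P i j) = 1"
    and P_edge: "\<And>i j. P i j > 0 \<longleftrightarrow> (i, j) \<in> E" and w_pos: "\<And>i j. (i, j) \<in> E \<Longrightarrow> w i j > 0"
    and st: "s \<noteq> t" and path: "\<exists>xs. is_dpath E xs s t"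
begin

lemma P_le1: "P x y \<le> 1"
proof -
  have "P x y \<le> (\<Sum>j\<in>UNIV. P x j)" by (rule member_le_sum) (auto simp: P_nonneg)
  then show ?thesis using P_stoch by simp
qed

lemma sum_sub_le1: "(\<Sum>j\<in>S. P x j) \<le> 1"
proof -
  have "(\<Sum>j\<in>S. P x j) \<le> (\<Sum>j\<in>UNIV. P x j)" by (rule sum_mono2) (auto simp: P_nonneg)
  then show ?thesis using P_stoch by simp
qed

lemma lay_nonneg: "lay P t n x \<ge> 0"
  by (induction n arbitrary: x) (auto intro!: sum_nonneg mult_nonneg_nonneg P_nonneg)

lemma sv_nonneg: "sv P G n x \<ge> 0"
  by (induction n arbitrary: x) (auto intro!: sum_nonneg mult_nonneg_nonneg P_nonneg)

lemma sv_out: "x \<notin> G \<Longrightarrow> sv P G n x = 0"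
  by (cases n) auto

lemma sv_Suc_G: "x \<in> G \<Longrightarrow> sv P G (Suc n) x = (\<Sum>y\<in>G. P x y * sv P G n y)"
  by (simp, rule sum.mono_neutral_right) (auto simp: sv_out)

lemma sv_one: "x \<in> G \<Longrightarrow> sv P G (Suc 0) x = (\<Sum>y\<in>G. P x y)"
  using sv_Suc_G[of x G 0] by (simp del: sv.simps(2))

lemma sv_le1: "sv P G n x \<le> 1"
proof (induction n arbitrary: x)
  case (Suc n)
  have "(\<Sum>y\<in>UNIV. P x y * sv P G n y) \<le> (\<Sum>y\<in>UNIV. P x y)"
    by (rule sum_mono) (use Suc P_nonneg in \<open>simp add: mult_left_le\<close>)
  then show ?case using P_stoch by simp
qed simp

lemma sv_mono: "sv P G (Suc n) x \<le> sv P G n x"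
proof (induction n arbitrary: x)
  case 0
  show ?case
  proof (cases "x \<in> G")
    case True then show ?thesis using sv_le1[of G "Suc 0" x] by (simp del: sv.simps(2))
  next
    case False then show ?thesis by (simp add: sv_out)
  qed
next
  case (Suc n)
  have "(\<Sum>y\<in>UNIV. P x y * sv P G (Suc n) y) \<le> (\<Sum>y\<in>UNIV. P x y * sv P G n y)"
    by (rule sum_mono) (use Suc P_nonneg in \<open>simp add: mult_left_mono\<close>)
  then show ?case by simp
qed

lemma sv_antimono: "m \<le> n \<Longrightarrow> sv P G n x \<le> sv P G m x"
proof (induction n rule: dec_induct)
  case (step n) then show ?case using sv_mono[of G n x] by linarith
qed simp

lemma sv_submult:
  assumes "\<And>y. y \<in> G \<Longrightarrow> sv P G k y \<le> B" "0 \<le> B"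
  shows "sv P G (m + k) x \<le> B * sv P G m x"
proof (induction m arbitrary: x)
  case 0
  then show ?case using assms by (cases "x \<in> G") (auto simp: sv_out)
next
  case (Suc m)
  have "(\<Sum>y\<in>UNIV. P x y * sv P G (m + k) y) \<le> (\<Sum>y\<in>UNIV. P x y * (B * sv P G m y))"
    by (rule sum_mono) (use Suc P_nonneg in \<open>simp add: mult_left_mono\<close>)
  also have "\<dots> = B * (\<Sum>y\<in>UNIV. P x y * sv P G m y)"
    by (simp add: sum_distrib_left algebra_simps)
  finally show ?case by simp
qed

lemma lay_pos_reach: "lay P t n y > 0 \<Longrightarrow> (y, t) \<in> E\<^sup>*"
proof (induction n arbitrary: y)
  case 0
  then show ?case using P_edge by (auto split: if_splits)
next
  case (Suc n)
  then have "y \<noteq> t" and pos: "(\<Sum>z\<in>UNIV. P y z * lay P t n z) > 0" by (auto split: if_splits)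
  then obtain z where "P y z * lay P t n z > 0"
    by (metis (no_types, lifting) not_le sum_nonpos)
  then have "P y z > 0" "lay P t n z > 0"
    using P_nonneg[of y z] lay_nonneg[of n z] by (auto simp: zero_less_mult_iff)
  then show ?case using Suc.IH P_edge by (meson converse_rtrancl_into_rtrancl)
qed

lemma reach_lay: "(x, t) \<in> E\<^sup>* \<Longrightarrow> x \<noteq> t \<Longrightarrow> \<exists>k. lay P t k x > 0"
proof (induction rule: converse_rtrancl_induct)
  case base
  then show ?case by simp
next
  case (step x y)
  show ?case
  proof (cases "y = t")
    case True
    then have "lay P t 0 x > 0" using step P_edge by simp
    then show ?thesis by blast
  next
    case False
    then obtain k where k: "lay P t k y > 0" using step by blast
    have "P x y * lay P t k y > 0" using k step P_edge by simp
    also have "P x y * lay P t k y \<le> (\<Sum>z\<in>UNIV. P x z * lay P t k z)"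
      by (rule member_le_sum) (auto intro: mult_nonneg_nonneg P_nonneg lay_nonneg)
    finally have "lay P t (Suc k) x > 0" using step by simp
    then show ?thesis by blast
  qed
qed

definition "Gs = {x. (x, t) \<in> E\<^sup>*} - {t}"

lemma lay_Suc_G: "x \<noteq> t \<Longrightarrow> lay P t (Suc n) x = (\<Sum>y\<in>Gs. P x y * lay P t n y)"
proof -
  assume "x \<noteq> t"
  moreover have "(\<Sum>y\<in>UNIV. P x y * lay P t n y) = (\<Sum>y\<in>Gs. P x y * lay P t n y)"
  proof (rule sum.mono_neutral_right)
    show "\<forall>i\<in>UNIV - Gs. P x i * lay P t n i = 0"
    proof
      fix i assume "i \<in> UNIV - Gs"
      then have "i = t \<or> (i, t) \<notin> E\<^sup>*" unfolding Gs_def by auto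
      moreover have "lay P t n t = 0" by (cases n) auto
      ultimately have "lay P t n i = 0"
        using lay_pos_reach[of n i] lay_nonneg[of n i] by fastforce
      then show "P x i * lay P t n i = 0" by simp
    qed
  qed auto
  ultimately show ?thesis by simp
qed

lemma key_ineq: "x \<in> Gs \<Longrightarrow> (\<Sum>k\<le>n. lay P t k x) + sv P Gs (Suc n) x \<le> 1"
proof (induction n arbitrary: x)
  case 0
  then have xt: "x \<noteq> t" "t \<notin> Gs" unfolding Gs_def by auto
  have "lay P t 0 x + sv P Gs (Suc 0) x = P x t + (\<Sum>y\<in>Gs. P x y)"
    using xt 0 by (simp only: sv_one[OF 0] lay.simps if_False)
  also have "\<dots> = (\<Sum>y\<in>insert t Gs. P x y)" using xt by simp
  also have "\<dots> \<le> 1" by (rule sum_sub_le1)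
  finally show ?case by simp
next
  case (Suc n)
  then have xt: "x \<noteq> t" "t \<notin> Gs" unfolding Gs_def by auto
  have "(\<Sum>k\<le>Suc n. lay P t k x) = lay P t 0 x + (\<Sum>k\<le>n. lay P t (Suc k) x)"
    by (rule sum.atMost_Suc_shift)
  also have "\<dots> = P x t + (\<Sum>k\<le>n. \<Sum>y\<in>Gs. P x y * lay P t k y)"
    using xt by (simp only: lay_Suc_G[OF xt(1)] lay.simps(1) if_False)
  also have "\<dots> = P x t + (\<Sum>y\<in>Gs. P x y * (\<Sum>k\<le>n. lay P t k y))"
    by (simp add: sum.swap[of _ "{..n}"] sum_distrib_left)
  finally have e1: "(\<Sum>k\<le>Suc n. lay P t k x) = P x t + (\<Sum>y\<in>Gs. P x y * (\<Sum>k\<le>n. lay P t k y))" .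
  have e2: "sv P Gs (Suc (Suc n)) x = (\<Sum>y\<in>Gs. P x y * sv P Gs (Suc n) y)"
    using sv_Suc_G[OF Suc.prems] .
  have "(\<Sum>k\<le>Suc n. lay P t k x) + sv P Gs (Suc (Suc n)) x
      = P x t + (\<Sum>y\<in>Gs. P x y * ((\<Sum>k\<le>n. lay P t k y) + sv P Gs (Suc n) y))"
    by (simp only: e1 e2 distrib_left sum.distrib add.assoc)
  also have "\<dots> \<le> P x t + (\<Sum>y\<in>Gs. P x y)"
    by (intro add_left_mono sum_mono) (use Suc.IH P_nonneg in \<open>simp add: mult_left_le\<close>)
  also have "\<dots> = (\<Sum>y\<in>insert t Gs. P x y)" using xt by simp
  also have "\<dots> \<le> 1" by (rule sum_sub_le1)
  finally show ?case .
qed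

lemma lay_le_sv: "x \<in> Gs \<Longrightarrow> lay P t n x \<le> sv P Gs n x"
proof (induction n arbitrary: x)
  case 0
  then show ?case using P_le1 by auto
next
  case (Suc n)
  then have xt: "x \<noteq> t" unfolding Gs_def by auto
  have "lay P t (Suc n) x = (\<Sum>y\<in>Gs. P x y * lay P t n y)" using lay_Suc_G[OF xt] .
  also have "\<dots> \<le> (\<Sum>y\<in>Gs. P x y * sv P Gs n y)"
    by (rule sum_mono) (use Suc P_nonneg in \<open>simp add: mult_left_mono\<close>)
  also have "\<dots> = sv P Gs (Suc n) x" using sv_Suc_G[OF Suc.prems] by simp
  finally show ?case .
qed

end

lemma geom_div_bound:
  fixes q :: real
  assumes "0 < q" "q < 1" "0 < K"
  shows "\<exists>C r. 0 \<le> r \<and> r < 1 \<and> (\<forall>n. q ^ (n div K) \<le> C * r ^ n)"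
proof -
  define r where "r = root K q"
  have r0: "0 < r" and r1: "r < 1" using assms by (auto simp: r_def real_root_lt_1_iff)
  have rK: "r ^ K = q" using assms by (simp add: r_def real_root_pow_pos2)
  have "q ^ (n div K) \<le> (1 / q) * r ^ n" for n
  proof -
    have "q ^ (n div K) = r ^ (K * (n div K))" by (simp add: rK power_mult)
    moreover have "r ^ (K * (n div K) + K) \<le> r ^ n"
    proof (rule power_decreasing)
      show "n \<le> K * (n div K) + K"
        using assms(3) by (metis add_le_cancel_left div_mult_mod_eq mod_less_divisor
            mult.commute nat_less_le)
    qed (use r0 r1 in auto)
    then have "r ^ (K * (n div K)) * q \<le> r ^ n" by (simp add: power_add rK)
    ultimately show ?thesis using assms by (simp add: field_simps)
  qed
  then show ?thesis using r0 r1 by (intro exI[of _ "1/q"] exI[of _ r]) auto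
qed

context evnet begin

lemma s_Gs: "s \<in> Gs"
proof -
  obtain xs where xs: "is_dpath E xs s t" using path by blast
  have "\<forall>i<length xs. (xs ! i, t) \<in> E\<^sup>*"
  proof (intro allI impI)
    fix i assume "i < length xs"
    then show "(xs ! i, t) \<in> E\<^sup>*"
    proof (induction "length xs - i" arbitrary: i rule: less_induct)
      case less
      show ?case
      proof (cases "Suc i < length xs")
        case True
        then have "(xs ! i, xs ! Suc i) \<in> E" using xs unfolding is_dpath_def by blast
        moreover have "(xs ! Suc i, t) \<in> E\<^sup>*" using less.hyps[of "Suc i"] True by simp
        ultimately show ?thesis by (meson converse_rtrancl_into_rtrancl)
      next
        case False
        then have "i = length xs - 1" using less.prems by simp
        then have "xs ! i = t" using xs unfolding is_dpath_def by (metis One_nat_def last_conv_nth)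
        then show ?thesis by simp
      qed
    qed
  qed
  moreover have "xs ! 0 = s" "0 < length xs" using xs unfolding is_dpath_def by (auto simp: hd_conv_nth)
  ultimately show ?thesis using st unfolding Gs_def by auto
qed

lemma decay: "\<exists>K q. 0 < K \<and> 0 < q \<and> q < 1 \<and> (\<forall>n x. sv P Gs n x \<le> q ^ (n div K))"
proof -
  have fin: "finite Gs" by simp
  have "\<forall>x\<in>Gs. \<exists>k. lay P t k x > 0" using reach_lay unfolding Gs_def by blast
  then obtain f where f: "\<And>x. x \<in> Gs \<Longrightarrow> lay P t (f x) x > 0" by metis
  define N0 where "N0 = (\<Sum>x\<in>Gs. f x)"
  have fN: "x \<in> Gs \<Longrightarrow> f x \<le> N0" for x unfolding N0_def by (rule member_le_sum) auto
  have spos: "(\<Sum>k\<le>N0. lay P t k x) > 0" if "x \<in> Gs" for x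
  proof -
    have "lay P t (f x) x \<le> (\<Sum>k\<le>N0. lay P t k x)"
      by (rule member_le_sum) (use fN[OF that] lay_nonneg in auto)
    then show ?thesis using f[OF that] by simp
  qed
  define q where "q = Max (insert (1/2) ((\<lambda>x. 1 - (\<Sum>k\<le>N0. lay P t k x)) ` Gs))"
  have q0: "q \<ge> 1/2" unfolding q_def by (rule Max_ge) auto
  have q1: "q < 1" unfolding q_def using spos by (subst Max_less_iff) auto
  have qb: "1 - (\<Sum>k\<le>N0. lay P t k x) \<le> q" if "x \<in> Gs" for x
    unfolding q_def by (rule Max_ge) (use that in auto)
  define K where "K = Suc N0"
  have svK: "sv P Gs K x \<le> q" if "x \<in> Gs" for x
    using key_ineq[OF that, of N0] qb[OF that] unfolding K_def by linarith
  have jK: "sv P Gs (j * K) x \<le> q ^ j" for j x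
  proof (induction j arbitrary: x)
    case 0
    then show ?case using sv_le1 by simp
  next
    case (Suc j)
    have "sv P Gs (j * K + K) x \<le> q * sv P Gs (j * K) x"
      by (rule sv_submult) (use svK q0 in auto)
    also have "\<dots> \<le> q * q ^ j" using Suc q0 by (intro mult_left_mono) auto
    finally show ?case by (simp add: add.commute)
  qed
  have "sv P Gs n x \<le> q ^ (n div K)" for n x
  proof -
    have "sv P Gs n x \<le> sv P Gs (n div K * K) x"
      by (rule sv_antimono) (simp add: div_times_less_eq_dividend)
    then show ?thesis using jK[of "n div K" x] by simp
  qed
  then show ?thesis using q0 q1 by (intro exI[of _ K] exI[of _ q]) (auto simp: K_def)
qed

lemma lay_geom: "\<exists>C r. 0 \<le> r \<and> r < 1 \<and> (\<forall>n. lay P t n s \<le> C * r ^ n)"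
proof -
  obtain K q where Kq: "0 < K" "0 < q" "q < 1" "\<And>n x. sv P Gs n x \<le> q ^ (n div K)"
    using decay by blast
  obtain C r where Cr: "0 \<le> r" "r < 1" "\<And>n. q ^ (n div K) \<le> C * r ^ n"
    using geom_div_bound[OF Kq(2,3,1)] by blast
  have "lay P t n s \<le> C * r ^ n" for n
    using lay_le_sv[OF s_Gs, of n] Kq(4)[of n s] Cr(3)[of n] by linarith
  then show ?thesis using Cr by blast
qed

lemma lay_Suc_T: "x \<noteq> t \<Longrightarrow> lay P t (Suc n) x = (\<Sum>y\<in>UNIV - {t}. P x y * lay P t n y)"
proof -
  assume "x \<noteq> t"
  moreover have "(\<Sum>y\<in>UNIV. P x y * lay P t n y) = (\<Sum>y\<in>UNIV - {t}. P x y * lay P t n y)"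
    by (rule sum.mono_neutral_right) (auto, cases n, auto)
  ultimately show ?thesis by simp
qed

lemma full_identity: "x \<noteq> t \<Longrightarrow> (\<Sum>k\<le>n. lay P t k x) + sv P (UNIV - {t}) (Suc n) x = 1"
proof (induction n arbitrary: x)
  case 0
  have x: "x \<in> UNIV - {t}" using 0 by simp
  have "lay P t 0 x + sv P (UNIV - {t}) (Suc 0) x = P x t + (\<Sum>y\<in>UNIV - {t}. P x y)"
    using 0 by (simp only: sv_one[OF x] lay.simps if_False)
  also have "\<dots> = (\<Sum>y\<in>UNIV. P x y)" by (simp add: sum.remove[of UNIV t])
  finally show ?case using P_stoch by simp
next
  case (Suc n)
  have x: "x \<in> UNIV - {t}" using Suc by simp
  have "(\<Sum>k\<le>Suc n. lay P t k x) = lay P t 0 x + (\<Sum>k\<le>n. lay P t (Suc k) x)"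
    by (rule sum.atMost_Suc_shift)
  also have "\<dots> = P x t + (\<Sum>k\<le>n. \<Sum>y\<in>UNIV - {t}. P x y * lay P t k y)"
    using Suc.prems by (simp only: lay_Suc_T[OF Suc.prems] lay.simps(1) if_False)
  also have "\<dots> = P x t + (\<Sum>y\<in>UNIV - {t}. P x y * (\<Sum>k\<le>n. lay P t k y))"
    by (simp add: sum.swap[of _ "{..n}"] sum_distrib_left)
  finally have e1: "(\<Sum>k\<le>Suc n. lay P t k x) = P x t + (\<Sum>y\<in>UNIV - {t}. P x y * (\<Sum>k\<le>n. lay P t k y))" .
  have e2: "sv P (UNIV - {t}) (Suc (Suc n)) x = (\<Sum>y\<in>UNIV - {t}. P x y * sv P (UNIV - {t}) (Suc n) y)"
    using sv_Suc_G[OF x] .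
  have "(\<Sum>k\<le>Suc n. lay P t k x) + sv P (UNIV - {t}) (Suc (Suc n)) x
      = P x t + (\<Sum>y\<in>UNIV - {t}. P x y * ((\<Sum>k\<le>n. lay P t k y) + sv P (UNIV - {t}) (Suc n) y))"
    by (simp only: e1 e2 distrib_left sum.distrib add.assoc)
  also have "\<dots> = P x t + (\<Sum>y\<in>UNIV - {t}. P x y)"
    using Suc.IH by (intro arg_cong2[where f="(+)"] sum.cong) auto
  also have "\<dots> = (\<Sum>y\<in>UNIV. P x y)" by (simp add: sum.remove[of UNIV t])
  finally show ?case using P_stoch by simp
qed

lemma sv_reach_le:
  assumes R: "\<forall>x. (s, x) \<in> E\<^sup>* \<longrightarrow> (x, t) \<in> E\<^sup>*"
  shows "(s, x) \<in> E\<^sup>* \<Longrightarrow> sv P (UNIV - {t}) n x \<le> sv P Gs n x"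
proof (induction n arbitrary: x)
  case 0
  then show ?case using R unfolding Gs_def by auto
next
  case (Suc n)
  show ?case
  proof (cases "x = t")
    case True then show ?thesis using sv_nonneg[of Gs "Suc n" x] by simp
  next
    case False
    then have xG: "x \<in> Gs" using R Suc.prems unfolding Gs_def by auto
    have "sv P (UNIV - {t}) (Suc n) x = (\<Sum>y\<in>UNIV. P x y * sv P (UNIV - {t}) n y)"
      using False by simp
    also have "\<dots> \<le> (\<Sum>y\<in>UNIV. P x y * sv P Gs n y)"
    proof (rule sum_mono)
      fix y :: 'a
      show "P x y * sv P (UNIV - {t}) n y \<le> P x y * sv P Gs n y"
      proof (cases "P x y > 0")
        case True
        then have "(s, y) \<in> E\<^sup>*" using Suc.prems P_edge by (meson rtrancl.rtrancl_into_rtrancl)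
        then show ?thesis using Suc.IH P_nonneg by (simp add: mult_left_mono)
      next
        case False
        then have "P x y = 0" using P_nonneg[of x y] by simp
        then show ?thesis by simp
      qed
    qed
    also have "\<dots> = sv P Gs (Suc n) x" using xG by simp
    finally show ?thesis .
  qed
qed

end

definition AW :: "'a \<Rightarrow> 'a \<Rightarrow> nat \<Rightarrow> 'a list set" where
  "AW t x n = {xs \<in> absorb_walks {} t x. length xs = n + 2}"

lemma AW_mem: "xs \<in> AW t x n \<longleftrightarrow> length xs = n + 2 \<and> hd xs = x \<and> last xs = t \<and> t \<notin> set (butlast xs)"
  unfolding AW_def absorb_walks_def by auto

lemma AW0: "AW t x 0 = (if x = t then {} else {[x, t]})"
proof -
  have "xs \<in> AW t x 0 \<longleftrightarrow> x \<noteq> t \<and> xs = [x, t]" for xs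
  proof
    assume h: "xs \<in> AW t x 0"
    then have "length xs = 2" by (simp add: AW_mem)
    then obtain a b where ab: "xs = [a, b]"
      by (metis One_nat_def Suc_1 length_0_conv length_Suc_conv)
    then show "x \<noteq> t \<and> xs = [x, t]" using h by (auto simp: AW_mem)
  qed (auto simp: AW_mem)
  then show ?thesis by auto
qed

lemma AWSuc: "AW t x (Suc n) = (if x = t then {} else (\<lambda>ys. x # ys) ` (\<Union>y. AW t y n))"
proof -
  have "xs \<in> AW t x (Suc n) \<longleftrightarrow> x \<noteq> t \<and> (\<exists>ys. xs = x # ys \<and> (\<exists>y. ys \<in> AW t y n))" for xs
  proof
    assume h: "xs \<in> AW t x (Suc n)"
    define ys where "ys = tl xs"
    have l: "length xs = n + 3" "hd xs = x" "last xs = t" "t \<notin> set (butlast xs)"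
      using h by (auto simp: AW_mem)
    have xs: "xs = x # ys" using l unfolding ys_def by (metis hd_Cons_tl list.size(3) zero_neq_numeral add_is_0)
    have ys: "ys \<noteq> []" using l xs by auto
    have "butlast xs = x # butlast ys" "last xs = last ys" using xs ys by auto
    then have "x \<noteq> t" "ys \<in> AW t (hd ys) n" using l xs by (auto simp: AW_mem)
    then show "x \<noteq> t \<and> (\<exists>ys. xs = x # ys \<and> (\<exists>y. ys \<in> AW t y n))" using xs by blast
  next
    assume h: "x \<noteq> t \<and> (\<exists>ys. xs = x # ys \<and> (\<exists>y. ys \<in> AW t y n))"
    then obtain ys y where xs: "xs = x # ys" and ys: "ys \<in> AW t y n" by blast
    then have "ys \<noteq> []" by (auto simp: AW_mem)
    then have "butlast xs = x # butlast ys" "last xs = last ys" using xs by auto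
    then show "xs \<in> AW t x (Suc n)" using h xs ys by (auto simp: AW_mem)
  qed
  then show ?thesis by (auto simp del: AW_mem) (blast)
qed

lemma A_Union: "absorb_walks {} t x = (\<Union>n. AW t x n)"
proof -
  have "xs \<in> absorb_walks {} t x \<longleftrightarrow> (\<exists>n. xs \<in> AW t x n)" for xs
  proof
    assume "xs \<in> absorb_walks {} t x"
    then have "xs \<in> AW t x (length xs - 2)" unfolding AW_def absorb_walks_def by auto
    then show "\<exists>n. xs \<in> AW t x n" by blast
  qed (auto simp: AW_def)
  then show ?thesis by auto
qed

lemma AW_fin: "finite (AW t x n :: ('a::finite) list set)"
proof -
  have "AW t x n \<subseteq> {xs. set xs \<subseteq> UNIV \<and> length xs = n + 2}" unfolding AW_def by auto
  moreover have "finite {xs :: 'a list. set xs \<subseteq> UNIV \<and> length xs = n + 2}"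
    by (rule finite_lists_length_eq) simp
  ultimately show ?thesis by (rule finite_subset)
qed

lemma walk_prob_Cons: "ys \<noteq> [] \<Longrightarrow> walk_prob M (x # ys) = M x (hd ys) * walk_prob M ys"
  by (cases ys) auto

lemma AW_ne: "ys \<in> AW t y n \<Longrightarrow> ys \<noteq> [] \<and> hd ys = y"
  by (auto simp: AW_mem)

lemma layer_sum: "(\<Sum>xs\<in>AW t x n. walk_prob M xs) = lay M t n (x :: 'a::finite)"
proof (induction n arbitrary: x)
  case 0
  then show ?case by (simp add: AW0)
next
  case (Suc n)
  show ?case
  proof (cases "x = t")
    case True then show ?thesis by (simp add: AWSuc)
  next
    case False
    have "(\<Sum>xs\<in>AW t x (Suc n). walk_prob M xs) = (\<Sum>ys\<in>(\<Union>y. AW t y n). walk_prob M (x # ys))"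
      using False by (simp only: AWSuc if_False sum.reindex[OF inj_on_Cons1] o_def)
    also have "\<dots> = (\<Sum>y\<in>UNIV. \<Sum>ys\<in>AW t y n. walk_prob M (x # ys))"
    proof (rule sum.UNION_disjoint)
      show "\<forall>i\<in>UNIV. \<forall>j\<in>UNIV. i \<noteq> j \<longrightarrow> AW t i n \<inter> AW t j n = {}"
        using AW_ne by (metis disjoint_iff)
    qed (auto simp: AW_fin)
    also have "\<dots> = (\<Sum>y\<in>UNIV. M x y * lay M t n y)"
    proof (rule sum.cong)
      fix y :: 'a
      have "(\<Sum>ys\<in>AW t y n. walk_prob M (x # ys)) = (\<Sum>ys\<in>AW t y n. M x y * walk_prob M ys)"
        by (rule sum.cong) (auto simp: walk_prob_Cons dest: AW_ne)
      then show "(\<Sum>ys\<in>AW t y n. walk_prob M (x # ys)) = M x y * lay M t n y"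
        by (simp add: sum_distrib_left[symmetric] Suc)
    qed simp
    finally show ?thesis using False by simp
  qed
qed

lemma AW_disj: "disjoint_family (AW t x)"
  unfolding disjoint_family_on_def by (auto simp: AW_mem)

lemma has_sum_Union_nonneg:
  fixes f :: "'b \<Rightarrow> real"
  assumes "\<And>n. (f has_sum g n) (B n)" "(g has_sum S) UNIV" "\<And>n y. y \<in> B n \<Longrightarrow> f y \<ge> 0"
    "disjoint_family B"
  shows "(f has_sum S) (\<Union>n. B n)"
proof -
  have sm: "(f \<circ> snd) summable_on Sigma UNIV B"
    by (rule summable_on_SigmaI[where g = g]) (use assms in \<open>auto simp: has_sum_imp_summable\<close>)
  have "(g has_sum infsum (f \<circ> snd) (Sigma UNIV B)) UNIV"
  proof (rule has_sum_SigmaD[where f = "f \<circ> snd"])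
    show "((f \<circ> snd) has_sum infsum (f \<circ> snd) (Sigma UNIV B)) (Sigma UNIV B)"
      using sm by (rule has_sum_infsum)
    show "\<And>x. x \<in> UNIV \<Longrightarrow> ((\<lambda>y. (f \<circ> snd) (x, y)) has_sum g x) (B x)" using assms(1) by simp
  qed
  then have eq: "infsum (f \<circ> snd) (Sigma UNIV B) = S" using assms(2) has_sum_unique by blast
  have inj: "inj_on snd (Sigma UNIV B)"
  proof (rule inj_onI)
    fix a b assume "a \<in> Sigma UNIV B" "b \<in> Sigma UNIV B" "snd a = snd b"
    then show "a = b" using assms(4) unfolding disjoint_family_on_def
      by (metis (no_types, lifting) SigmaE disjoint_iff prod.collapse prod.inject UNIV_I)
  qed
  have im: "snd ` Sigma UNIV B = (\<Union>n. B n)" by force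
  have "((f \<circ> snd) has_sum S) (Sigma UNIV B)" using sm eq by (metis has_sum_infsum)
  then show ?thesis using has_sum_reindex[OF inj, of f S] im by simp
qed

lemma cost_le: "(\<And>i j. \<bar>w i j\<bar> \<le> Wm) \<Longrightarrow> 0 \<le> Wm \<Longrightarrow> walk_cost w xs \<le> Wm * length xs"
proof (induction xs rule: induct_list012)
  case (3 x y zs)
  have "w x y \<le> Wm" using 3(3)[of x y] by linarith
  then show ?case using 3 by (simp add: algebra_simps)
qed auto

lemma summable_on_diff_real:
  fixes f g :: "'b \<Rightarrow> real"
  assumes "f summable_on A" "g summable_on A"
  shows "(\<lambda>x. f x - g x) summable_on A"
proof -
  have "(\<lambda>x. f x + (- g x)) summable_on A"
    using assms by (intro summable_on_add) (auto simp: summable_on_uminus)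
  then show ?thesis by simp
qed

lemma infsum_diff_real:
  fixes f g :: "'b \<Rightarrow> real"
  assumes "f summable_on A" "g summable_on A"
  shows "infsum (\<lambda>x. f x - g x) A = infsum f A - infsum g A"
proof -
  have "infsum (\<lambda>x. f x + (- g x)) A = infsum f A + infsum (\<lambda>x. - g x) A"
    using assms by (intro infsum_add) (auto simp: summable_on_uminus)
  then show ?thesis by (simp add: infsum_uminus)
qed

lemma infsum_dom_tendsto0:
  fixes f :: "'c \<Rightarrow> 'b \<Rightarrow> real"
  assumes g: "g summable_on A"
    and dom: "\<forall>\<^sub>F a in F. \<forall>x\<in>A. \<bar>f a x\<bar> \<le> g x"
    and lim: "\<And>x. x \<in> A \<Longrightarrow> ((\<lambda>a. f a x) \<longlongrightarrow> 0) F"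
  shows "((\<lambda>a. infsum (f a) A) \<longlongrightarrow> 0) F"
proof (rule tendstoI)
  fix e :: real assume e: "e > 0"
  have "(sum g \<longlongrightarrow> infsum g A) (finite_subsets_at_top A)" using g by (rule infsum_tendsto)
  then have "\<forall>\<^sub>F X in finite_subsets_at_top A. dist (sum g X) (infsum g A) < e / 2"
    using e by (intro tendstoD) auto
  then obtain X where X: "finite X" "X \<subseteq> A" "dist (sum g X) (infsum g A) < e / 2"
    unfolding eventually_finite_subsets_at_top by blast
  have gsX: "g summable_on (A - X)" using g by (rule summable_on_subset_banach) auto
  have "infsum g A = infsum g (X \<union> (A - X))" using X by (simp add: Un_absorb1)
  also have "\<dots> = infsum g X + infsum g (A - X)"
    by (rule infsum_Un_disjoint) (use X gsX in auto)
  finally have tail: "infsum g (A - X) < e / 2" using X(1,3) by (simp add: dist_real_def)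
  have "((\<lambda>a. \<Sum>x\<in>X. f a x) \<longlongrightarrow> 0) F"
    by (rule tendsto_null_sum) (use lim X in auto)
  then have ev: "\<forall>\<^sub>F a in F. dist (\<Sum>x\<in>X. f a x) 0 < e / 2" using e by (intro tendstoD) auto
  show "\<forall>\<^sub>F a in F. dist (infsum (f a) A) 0 < e"
    using dom ev
  proof eventually_elim
    case (elim a)
    have absA: "(\<lambda>x. norm (f a x)) summable_on A"
      by (rule summable_on_comparison_test[OF g]) (use elim(1) in auto)
    then have sA: "f a summable_on A" by (rule abs_summable_summable)
    have sAX: "f a summable_on (A - X)" using sA by (rule summable_on_subset_banach) auto
    have "infsum (f a) A = infsum (f a) (X \<union> (A - X))" using X by (simp add: Un_absorb1)
    also have "\<dots> = infsum (f a) X + infsum (f a) (A - X)"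
      by (rule infsum_Un_disjoint) (use X sAX in auto)
    finally have split: "infsum (f a) A = (\<Sum>x\<in>X. f a x) + infsum (f a) (A - X)" using X by simp
    have up: "infsum (f a) (A - X) \<le> infsum g (A - X)"
      by (rule infsum_mono) (use sAX gsX elim(1) in \<open>auto simp: abs_le_iff\<close>)
    have "infsum (\<lambda>x. - g x) (A - X) \<le> infsum (f a) (A - X)"
      by (rule infsum_mono) (use sAX gsX elim(1) in \<open>auto simp: abs_le_iff summable_on_uminus\<close>)
    then have lo: "- infsum g (A - X) \<le> infsum (f a) (A - X)" by (simp add: infsum_uminus)
    have h1: "(\<Sum>x\<in>X. f a x) < e/2" "-(\<Sum>x\<in>X. f a x) < e/2"
      using elim(2) by (auto simp: dist_real_def abs_less_iff)
    have "\<bar>infsum (f a) A\<bar> < e" unfolding abs_less_iff using split up lo tail h1 by linarith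
    then show ?case by (simp add: dist_real_def)
  qed
qed

lemma powr_cross:
  fixes a1 a2 u v :: real
  assumes "0 < a1" "a1 < a2"
  shows "0 \<le> (u - v) * (a2 powr u * a1 powr v - a1 powr u * a2 powr v)"
proof (cases "v \<le> u")
  case True
  have e1: "a2 powr u * a1 powr v = a2 powr (u - v) * (a2 powr v * a1 powr v)"
    using assms by (simp add: powr_add[symmetric])
  have e2: "a1 powr u * a2 powr v = a1 powr (u - v) * (a2 powr v * a1 powr v)"
    using assms by (simp add: powr_add[symmetric])
  have "a1 powr (u - v) \<le> a2 powr (u - v)" using assms True by (intro powr_mono2) auto
  then have "a1 powr u * a2 powr v \<le> a2 powr u * a1 powr v"
    unfolding e1 e2 by (intro mult_right_mono) auto
  then show ?thesis using True by simp
next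
  case False
  have e1: "a2 powr u * a1 powr v = a1 powr (v - u) * (a2 powr u * a1 powr u)"
    using assms by (simp add: powr_add[symmetric])
  have e2: "a1 powr u * a2 powr v = a2 powr (v - u) * (a2 powr u * a1 powr u)"
    using assms by (simp add: powr_add[symmetric])
  have "a1 powr (v - u) \<le> a2 powr (v - u)" using assms False by (intro powr_mono2) auto
  then have "a2 powr u * a1 powr v \<le> a1 powr u * a2 powr v"
    unfolding e1 e2 by (intro mult_right_mono) auto
  then show ?thesis using False by (simp add: mult_nonpos_nonpos)
qed

lemma finite_cross:
  fixes p c :: "'b \<Rightarrow> real"
  assumes "finite F" "\<And>x. p x \<ge> 0" "0 < a1" "a1 < a2"
  shows "(\<Sum>x\<in>F. p x * a1 powr c x * c x) * (\<Sum>x\<in>F. p x * a2 powr c x)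
       \<le> (\<Sum>x\<in>F. p x * a2 powr c x * c x) * (\<Sum>x\<in>F. p x * a1 powr c x)"
proof -
  define X where "X x y = p x * p y * (a2 powr c x * a1 powr c y - a1 powr c x * a2 powr c y)" for x y
  define T where "T = (\<Sum>x\<in>F. \<Sum>y\<in>F. c x * X x y)"
  have pr1: "(\<Sum>x\<in>F. p x * a2 powr c x * c x) * (\<Sum>x\<in>F. p x * a1 powr c x)
     = (\<Sum>x\<in>F. \<Sum>y\<in>F. (p x * a2 powr c x * c x) * (p y * a1 powr c y))" by (rule sum_product)
  have pr2: "(\<Sum>x\<in>F. p x * a1 powr c x * c x) * (\<Sum>x\<in>F. p x * a2 powr c x)
     = (\<Sum>x\<in>F. \<Sum>y\<in>F. (p x * a1 powr c x * c x) * (p y * a2 powr c y))" by (rule sum_product)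
  have diff: "(\<Sum>x\<in>F. p x * a2 powr c x * c x) * (\<Sum>x\<in>F. p x * a1 powr c x)
     - (\<Sum>x\<in>F. p x * a1 powr c x * c x) * (\<Sum>x\<in>F. p x * a2 powr c x) = T"
    unfolding pr1 pr2 T_def X_def sum_subtractf[symmetric]
    by (intro sum.cong refl) (simp add: algebra_simps)
  have "T = (\<Sum>y\<in>F. \<Sum>x\<in>F. c x * X x y)" unfolding T_def by (rule sum.swap)
  also have "\<dots> = (\<Sum>x\<in>F. \<Sum>y\<in>F. - (c y * X x y))"
    unfolding X_def by (intro sum.cong refl) (simp add: algebra_simps)
  finally have T2: "T = - (\<Sum>x\<in>F. \<Sum>y\<in>F. c y * X x y)" by (simp add: sum_negf)
  have "(\<Sum>x\<in>F. \<Sum>y\<in>F. (c x - c y) * X x y) = T - (\<Sum>x\<in>F. \<Sum>y\<in>F. c y * X x y)"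
    unfolding T_def by (simp add: left_diff_distrib sum_subtractf)
  then have "2 * T = (\<Sum>x\<in>F. \<Sum>y\<in>F. (c x - c y) * X x y)"
    using T2 by linarith
  also have "\<dots> \<ge> 0"
  proof (intro sum_nonneg)
    fix x y
    have "0 \<le> (c x - c y) * (a2 powr c x * a1 powr c y - a1 powr c x * a2 powr c y)"
      using powr_cross assms by blast
    then show "0 \<le> (c x - c y) * X x y"
      unfolding X_def using assms(2)[of x] assms(2)[of y]
      by (metis (no_types, lifting) mult.left_commute mult_nonneg_nonneg)
  qed
  finally show ?thesis using diff by linarith
qed

lemma infsum_cross:
  fixes p c :: "'b \<Rightarrow> real"
  assumes "\<And>x. p x \<ge> 0" "0 < a1" "a1 < a2"
    and s1: "(\<lambda>x. p x * a1 powr c x * c x) summable_on A" and s2: "(\<lambda>x. p x * a2 powr c x) summable_on A"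
    and s3: "(\<lambda>x. p x * a2 powr c x * c x) summable_on A" and s4: "(\<lambda>x. p x * a1 powr c x) summable_on A"
  shows "infsum (\<lambda>x. p x * a1 powr c x * c x) A * infsum (\<lambda>x. p x * a2 powr c x) A
       \<le> infsum (\<lambda>x. p x * a2 powr c x * c x) A * infsum (\<lambda>x. p x * a1 powr c x) A"
proof (rule tendsto_le[OF finite_subsets_at_top_neq_bot])
  show "((\<lambda>F. sum (\<lambda>x. p x * a2 powr c x * c x) F * sum (\<lambda>x. p x * a1 powr c x) F) \<longlongrightarrow>
     infsum (\<lambda>x. p x * a2 powr c x * c x) A * infsum (\<lambda>x. p x * a1 powr c x) A) (finite_subsets_at_top A)"
    by (intro tendsto_mult infsum_tendsto s3 s4)
  show "((\<lambda>F. sum (\<lambda>x. p x * a1 powr c x * c x) F * sum (\<lambda>x. p x * a2 powr c x) F) \<longlongrightarrow>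
     infsum (\<lambda>x. p x * a1 powr c x * c x) A * infsum (\<lambda>x. p x * a2 powr c x) A) (finite_subsets_at_top A)"
    by (intro tendsto_mult infsum_tendsto s1 s2)
  show "\<forall>\<^sub>F F in finite_subsets_at_top A.
     sum (\<lambda>x. p x * a1 powr c x * c x) F * sum (\<lambda>x. p x * a2 powr c x) F
     \<le> sum (\<lambda>x. p x * a2 powr c x * c x) F * sum (\<lambda>x. p x * a1 powr c x) F"
    using finite_cross[where p=p and c=c, OF _ assms(1) assms(2) assms(3)]
    by (intro eventually_finite_subsets_at_top_weakI) auto
qed

context evnet begin

definition "AS = absorb_walks {} t s"

lemma p_nonneg: "walk_prob P xs \<ge> 0"
  using walk_prob_nonneg[of P xs] P_nonneg by blast

lemma p_pos_eok: "walk_prob P xs > 0 \<longleftrightarrow> eok E xs"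
  using walk_prob_pos_iff[of P E xs] P_nonneg P_edge by blast

lemma c_nonneg_pos: "walk_prob P xs > 0 \<Longrightarrow> walk_cost w xs \<ge> 0"
  using cost_nonneg[of E w xs] w_pos p_pos_eok by (meson less_imp_le)

lemma pc_nonneg: "walk_prob P xs * walk_cost w xs \<ge> 0"
  using c_nonneg_pos[of xs] p_nonneg[of xs] by (cases "walk_prob P xs > 0") auto

definition "Wm = (\<Sum>i\<in>UNIV. \<Sum>j\<in>UNIV. \<bar>w i j\<bar>)"

lemma Wm_ge: "\<bar>w i j\<bar> \<le> Wm"
proof -
  have "\<bar>w i j\<bar> \<le> (\<Sum>j\<in>UNIV. \<bar>w i j\<bar>)" by (rule member_le_sum) auto
  also have "\<dots> \<le> Wm" unfolding Wm_def by (rule member_le_sum[of i _ "\<lambda>i. \<Sum>j\<in>UNIV. \<bar>w i j\<bar>"]) (auto intro: sum_nonneg)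
  finally show ?thesis .
qed

lemma Wm_nonneg: "Wm \<ge> 0" unfolding Wm_def by (auto intro: sum_nonneg)

lemma sv_geom: "\<exists>C r. 0 \<le> r \<and> r < 1 \<and> (\<forall>n x. sv P Gs n x \<le> C * r ^ n)"
proof -
  obtain K q where Kq: "0 < K" "0 < q" "q < 1" "\<And>n x. sv P Gs n x \<le> q ^ (n div K)"
    using decay by blast
  obtain C r where Cr: "0 \<le> r" "r < 1" "\<And>n. q ^ (n div K) \<le> C * r ^ n"
    using geom_div_bound[OF Kq(2,3,1)] by blast
  show ?thesis using Kq(4) Cr order_trans by blast
qed

lemma lay_summable: "summable (\<lambda>n. lay P t n s)"
proof -
  obtain C r where Cr: "0 \<le> r" "r < 1" "\<And>n. lay P t n s \<le> C * r ^ n" using lay_geom by blast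
  show ?thesis
    by (rule summable_comparison_test'[where g = "\<lambda>n. C * r ^ n" and N = 0])
      (use Cr lay_nonneg in auto)
qed

lemma AW_has_sum: "((\<lambda>xs. f xs) has_sum (\<Sum>xs\<in>AW t s n. f xs)) (AW t s n)"
  using AW_fin by (rule has_sum_finite)

lemma p_has_sum: "(walk_prob P has_sum (\<Sum>n. lay P t n s)) AS"
proof -
  have "(walk_prob P has_sum (\<Sum>n. lay P t n s)) (\<Union>n. AW t s n)"
  proof (rule has_sum_Union_nonneg[where g = "\<lambda>n. lay P t n s"])
    show "(walk_prob P has_sum lay P t n s) (AW t s n)" for n
      using AW_has_sum[of "walk_prob P" n] layer_sum[where M=P and t=t and x=s and n=n] by simp
    show "((\<lambda>n. lay P t n s) has_sum (\<Sum>n. lay P t n s)) UNIV"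
      by (rule sums_nonneg_imp_has_sum) (use lay_summable lay_nonneg in auto)
  qed (auto simp: p_nonneg AW_disj)
  then show ?thesis unfolding AS_def A_Union .
qed

lemma p_summable: "walk_prob P summable_on AS"
  using p_has_sum has_sum_imp_summable by blast

lemma pc_summable: "(\<lambda>xs. walk_prob P xs * walk_cost w xs) summable_on AS"
proof -
  obtain C r where Cr: "0 \<le> r" "r < 1" "\<And>n. lay P t n s \<le> C * r ^ n" using lay_geom by blast
  define g where "g n = (\<Sum>xs\<in>AW t s n. walk_prob P xs * walk_cost w xs)" for n
  have gle: "g n \<le> 2 * Wm * C * (real (Suc n) * r ^ n)" for n
  proof -
    have "g n \<le> (\<Sum>xs\<in>AW t s n. walk_prob P xs * (Wm * (n + 2)))"
      unfolding g_def
    proof (rule sum_mono)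
      fix xs assume "xs \<in> AW t s n"
      then have "length xs = n + 2" by (simp add: AW_mem)
      then have "walk_cost w xs \<le> Wm * (n + 2)" using cost_le[of w Wm xs] Wm_ge Wm_nonneg by simp
      then show "walk_prob P xs * walk_cost w xs \<le> walk_prob P xs * (Wm * (n + 2))"
        using p_nonneg by (intro mult_left_mono) auto
    qed
    also have "\<dots> = Wm * (n + 2) * lay P t n s"
      by (simp add: sum_distrib_right[symmetric] layer_sum mult.commute)
    also have "\<dots> \<le> Wm * (n + 2) * (C * r ^ n)"
      using Cr Wm_nonneg by (intro mult_left_mono) auto
    also have "\<dots> \<le> Wm * (2 * (n + 1)) * (C * r ^ n)"
    proof (rule mult_right_mono)
      show "0 \<le> C * r ^ n" using Cr(3)[of n] lay_nonneg[of n s] by linarith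
    qed (use Wm_nonneg in \<open>auto intro: mult_left_mono\<close>)
    finally show ?thesis by (simp add: algebra_simps)
  qed
  have g0: "g n \<ge> 0" for n unfolding g_def by (auto intro: sum_nonneg pc_nonneg)
  have "summable (\<lambda>n. real (Suc n) * r ^ n)"
    using geometric_deriv_sums[of r] Cr by (auto simp: sums_iff)
  then have "summable (\<lambda>n. 2 * Wm * C * (real (Suc n) * r ^ n))" by (rule summable_mult)
  then have "summable g"
    by (rule summable_comparison_test'[where N = 0]) (use gle g0 in auto)
  then have gs: "g summable_on UNIV"
    by (rule summable_nonneg_imp_summable_on_strong) (use g0 in auto)
  have "(\<lambda>xs. walk_prob P xs * walk_cost w xs) summable_on (\<Union>n. AW t s n)"
    by (rule summable_on_UnionI[where g = g, OF _ gs])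
      (auto simp: g_def AW_has_sum pc_nonneg AW_disj)
  then show ?thesis unfolding AS_def A_Union .
qed

end

context evnet begin

lemma evap_pow: "\<alpha> > 0 \<Longrightarrow> evap_walk_prob P w \<alpha> xs = walk_prob P xs * \<alpha> powr walk_cost w xs"
  by (simp add: evap_eq walk_prob_powr)

lemma pow_le1: "0 < \<alpha> \<Longrightarrow> \<alpha> \<le> 1 \<Longrightarrow> walk_prob P xs > 0 \<Longrightarrow> \<alpha> powr walk_cost w xs \<le> 1"
proof -
  assume a: "0 < \<alpha>" "\<alpha> \<le> 1" "walk_prob P xs > 0"
  have "walk_cost w xs \<ge> 0" using c_nonneg_pos a(3) by blast
  then have "\<alpha> powr walk_cost w xs \<le> 1 powr walk_cost w xs" using a by (intro powr_mono2) auto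
  then show ?thesis by simp
qed

lemma D_bounds: "0 < \<alpha> \<Longrightarrow> \<alpha> \<le> 1 \<Longrightarrow>
   0 \<le> walk_prob P xs * \<alpha> powr walk_cost w xs \<and> walk_prob P xs * \<alpha> powr walk_cost w xs \<le> walk_prob P xs"
proof (cases "walk_prob P xs > 0")
  case True
  assume "0 < \<alpha>" "\<alpha> \<le> 1"
  then show ?thesis using True pow_le1[of \<alpha> xs] by (simp add: mult_left_le)
next
  case False
  then show ?thesis using p_nonneg[of xs] by simp
qed

lemma N_bounds: "0 < \<alpha> \<Longrightarrow> \<alpha> \<le> 1 \<Longrightarrow>
   0 \<le> walk_prob P xs * \<alpha> powr walk_cost w xs * walk_cost w xs \<and>
   walk_prob P xs * \<alpha> powr walk_cost w xs * walk_cost w xs \<le> walk_prob P xs * walk_cost w xs"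
proof (cases "walk_prob P xs > 0")
  case True
  assume a: "0 < \<alpha>" "\<alpha> \<le> 1"
  have c: "walk_cost w xs \<ge> 0" using c_nonneg_pos True by blast
  have "walk_prob P xs * \<alpha> powr walk_cost w xs \<le> walk_prob P xs" using D_bounds[OF a] by blast
  then show ?thesis using D_bounds[OF a, of xs] c by (simp add: mult_right_mono)
next
  case False
  then show ?thesis using p_nonneg[of xs] by simp
qed

lemma D_summable: "0 < \<alpha> \<Longrightarrow> \<alpha> \<le> 1 \<Longrightarrow> (\<lambda>xs. walk_prob P xs * \<alpha> powr walk_cost w xs) summable_on AS"
  by (rule summable_on_comparison_test[OF p_summable]) (use D_bounds in auto)

lemma N_summable: "0 < \<alpha> \<Longrightarrow> \<alpha> \<le> 1 \<Longrightarrow> (\<lambda>xs. walk_prob P xs * \<alpha> powr walk_cost w xs * walk_cost w xs) summable_on AS"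
  by (rule summable_on_comparison_test[OF pc_summable]) (use N_bounds in auto)

lemma U_eq: "0 < \<alpha> \<Longrightarrow> avoid_hitting_cost P w \<alpha> t {} s =
   infsum (\<lambda>xs. walk_prob P xs * \<alpha> powr walk_cost w xs * walk_cost w xs) AS /
   infsum (\<lambda>xs. walk_prob P xs * \<alpha> powr walk_cost w xs) AS"
proof -
  assume a: "0 < \<alpha>"
  have "evap_walk_prob P w \<alpha> = (\<lambda>xs. walk_prob P xs * \<alpha> powr walk_cost w xs)"
    using a by (intro ext) (simp add: evap_pow)
  then show ?thesis unfolding avoid_hitting_cost_def avoid_absorb_prob_def AS_def by simp
qed

definition "DP = {xs. is_dpath E xs s t \<and> distinct xs}"

lemma dpath_eok: "is_dpath E xs s t \<longleftrightarrow> xs \<noteq> [] \<and> hd xs = s \<and> last xs = t \<and> eok E xs"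
  unfolding is_dpath_def eok_iff by blast

lemma DP_fin: "finite DP"
proof -
  have "length xs \<le> card (UNIV :: 'a set)" if "xs \<in> DP" for xs
  proof -
    have "distinct xs" using that unfolding DP_def by simp
    then have "length xs = card (set xs)" by (simp add: distinct_card)
    also have "\<dots> \<le> card (UNIV :: 'a set)" by (rule card_mono) auto
    finally show ?thesis .
  qed
  then have "DP \<subseteq> {xs. set xs \<subseteq> UNIV \<and> length xs \<le> card (UNIV :: 'a set)}" by blast
  moreover have "finite {xs :: 'a list. set xs \<subseteq> UNIV \<and> length xs \<le> card (UNIV :: 'a set)}"
    by (rule finite_lists_length_le) simp
  ultimately show ?thesis by (rule finite_subset)
qed

lemma shortcut_dp: "eok E xs \<Longrightarrow> xs \<noteq> [] \<Longrightarrow> hd xs = s \<Longrightarrow> last xs = t \<Longrightarrow>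
   \<exists>ys\<in>DP. walk_cost w ys \<le> walk_cost w xs"
proof -
  assume a: "eok E xs" "xs \<noteq> []" "hd xs = s" "last xs = t"
  have wnn: "\<And>i j. (i, j) \<in> E \<Longrightarrow> w i j \<ge> 0" using w_pos less_imp_le by blast
  obtain ys where ys: "eok E ys" "ys \<noteq> []" "hd ys = hd xs" "last ys = last xs" "distinct ys"
      "walk_cost w ys \<le> walk_cost w xs"
    using shortcut[of E w, OF wnn a(1,2)] by blast
  have "ys \<in> DP" unfolding DP_def mem_Collect_eq dpath_eok using ys a by simp
  then show ?thesis using ys(6) by blast
qed

lemma DP_ne: "DP \<noteq> {}"
proof -
  obtain xs where "is_dpath E xs s t" using path by blast
  then have "eok E xs" "xs \<noteq> []" "hd xs = s" "last xs = t" unfolding dpath_eok by simp_all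
  then show ?thesis using shortcut_dp by blast
qed

lemma L_le: "xs \<in> AS \<Longrightarrow> walk_prob P xs > 0 \<Longrightarrow> shortest_dist E w s t \<le> walk_cost w xs"
proof -
  assume "xs \<in> AS" "walk_prob P xs > 0"
  then have "eok E xs" "xs \<noteq> []" "hd xs = s" "last xs = t"
    using p_pos_eok unfolding AS_def absorb_walks_def by auto
  then obtain ys where "ys \<in> DP" "walk_cost w ys \<le> walk_cost w xs" using shortcut_dp by blast
  moreover have "shortest_dist E w s t \<le> walk_cost w ys"
    unfolding shortest_dist_def DP_def[symmetric] using DP_fin \<open>ys \<in> DP\<close> by (intro Min_le) auto
  ultimately show ?thesis by linarith
qed

end

context evnet begin
lemma x0_ex: "\<exists>x0\<in>AS. walk_prob P x0 > 0 \<and> walk_cost w x0 = shortest_dist E w s t"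
proof -
  have "shortest_dist E w s t \<in> walk_cost w ` DP"
    unfolding shortest_dist_def DP_def[symmetric] using DP_fin DP_ne by (intro Min_in) auto
  then obtain x0 where x0: "x0 \<in> DP" "walk_cost w x0 = shortest_dist E w s t" by (rule imageE) (rule that, auto)
  then have d: "distinct x0" "eok E x0" "x0 \<noteq> []" "hd x0 = s" "last x0 = t"
    unfolding DP_def mem_Collect_eq dpath_eok by blast+
  have len: "2 \<le> length x0"
  proof (rule ccontr)
    assume "\<not> 2 \<le> length x0"
    moreover have "length x0 \<noteq> 0" using d(3) by simp
    ultimately have l1: "length x0 = 1" by linarith
    have "last x0 = x0 ! (length x0 - 1)" using d(3) by (rule last_conv_nth)
    moreover have "hd x0 = x0 ! 0" using d(3) by (rule hd_conv_nth)
    ultimately have "hd x0 = last x0" using l1 by simp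
    then show False using d st by simp
  qed
  have "t \<notin> set (butlast x0)"
  proof -
    have "butlast x0 @ [last x0] = x0" using d(3) by (rule append_butlast_last_id)
    then have "distinct (butlast x0 @ [last x0])" using d(1) by simp
    then show ?thesis using d(5) by simp
  qed
  then have "x0 \<in> AS" unfolding AS_def absorb_walks_def using len d(4,5) by blast
  moreover have "walk_prob P x0 > 0" using d(2) by (simp add: p_pos_eok)
  ultimately show ?thesis using x0(2) by blast
qed

lemma D_pos: "0 < \<alpha> \<Longrightarrow> \<alpha> \<le> 1 \<Longrightarrow> x0 \<in> AS \<Longrightarrow>
    walk_prob P x0 * \<alpha> powr walk_cost w x0 \<le> infsum (\<lambda>xs. walk_prob P xs * \<alpha> powr walk_cost w xs) AS"
proof -
  assume a: "0 < \<alpha>" "\<alpha> \<le> 1" "x0 \<in> AS"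
  have "infsum (\<lambda>xs. walk_prob P xs * \<alpha> powr walk_cost w xs) {x0}
      \<le> infsum (\<lambda>xs. walk_prob P xs * \<alpha> powr walk_cost w xs) AS"
    by (rule infsum_mono_neutral) (use a D_summable D_bounds in auto)
  then show ?thesis by simp
qed

theorem part_c: "0 < \<alpha>1 \<Longrightarrow> \<alpha>1 < \<alpha>2 \<Longrightarrow> \<alpha>2 \<le> 1 \<Longrightarrow>
   avoid_hitting_cost P w \<alpha>1 t {} s \<le> avoid_hitting_cost P w \<alpha>2 t {} s"
proof -
  assume a: "0 < \<alpha>1" "\<alpha>1 < \<alpha>2" "\<alpha>2 \<le> 1"
  obtain x0 where x0: "x0 \<in> AS" "walk_prob P x0 > 0" using x0_ex by blast
  have D1: "infsum (\<lambda>xs. walk_prob P xs * \<alpha>1 powr walk_cost w xs) AS > 0"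
    using D_pos[of \<alpha>1 x0] x0 a by (smt (verit) mult_pos_pos powr_gt_zero)
  have D2: "infsum (\<lambda>xs. walk_prob P xs * \<alpha>2 powr walk_cost w xs) AS > 0"
    using D_pos[of \<alpha>2 x0] x0 a by (smt (verit) mult_pos_pos powr_gt_zero)
  have "infsum (\<lambda>xs. walk_prob P xs * \<alpha>1 powr walk_cost w xs * walk_cost w xs) AS *
        infsum (\<lambda>xs. walk_prob P xs * \<alpha>2 powr walk_cost w xs) AS
      \<le> infsum (\<lambda>xs. walk_prob P xs * \<alpha>2 powr walk_cost w xs * walk_cost w xs) AS *
        infsum (\<lambda>xs. walk_prob P xs * \<alpha>1 powr walk_cost w xs) AS"
    by (rule infsum_cross[where p = "walk_prob P"]) 
      (use a p_nonneg N_summable D_summable in auto)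
  then show ?thesis using a D1 D2 by (simp add: U_eq divide_simps mult.commute)
qed

end

context evnet begin

lemma powr_tendsto1: "((\<lambda>\<alpha>::real. \<alpha> powr c) \<longlongrightarrow> 1) (at_left 1)"
proof -
  have "((\<lambda>\<alpha>::real. \<alpha> powr c) \<longlongrightarrow> 1 powr c) (at_left 1)"
    by (rule tendsto_powr) (auto intro: tendsto_ident_at)
  then show ?thesis by simp
qed

lemma ev_left: "\<forall>\<^sub>F \<alpha> in at_left (1::real). 0 < \<alpha> \<and> \<alpha> \<le> 1"
  using eventually_at_left_real[of 0 1] by (rule eventually_mono) auto

lemma ev_right: "\<forall>\<^sub>F \<alpha> in at_right (0::real). 0 < \<alpha> \<and> \<alpha> \<le> 1"
  using eventually_at_right_real[of 0 1] by (rule eventually_mono) auto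

lemma D_one:
  assumes R: "\<forall>x. (s, x) \<in> E\<^sup>* \<longrightarrow> (x, t) \<in> E\<^sup>*"
  shows "infsum (walk_prob P) AS = 1"
proof -
  obtain C r where Cr: "0 \<le> r" "r < 1" "\<And>n x. sv P Gs n x \<le> C * r ^ n" using sv_geom by blast
  have b: "norm (sv P (UNIV - {t}) (Suc n) s) \<le> C * r ^ n" for n
  proof -
    have "sv P (UNIV - {t}) (Suc n) s \<le> sv P (UNIV - {t}) n s" by (rule sv_mono)
    also have "\<dots> \<le> sv P Gs n s" by (rule sv_reach_le[OF R rtrancl.rtrancl_refl])
    also have "\<dots> \<le> C * r ^ n" by (rule Cr(3))
    finally have "sv P (UNIV - {t}) (Suc n) s \<le> C * r ^ n" .
    moreover have "norm (sv P (UNIV - {t}) (Suc n) s) = sv P (UNIV - {t}) (Suc n) s"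
      using sv_nonneg[of "UNIV - {t}" "Suc n" s] by (simp only: real_norm_def abs_of_nonneg)
    ultimately show ?thesis by linarith
  qed
  have "(\<lambda>n. r ^ n) \<longlonglongrightarrow> 0" by (rule LIMSEQ_power_zero) (use Cr in simp)
  then have l1: "(\<lambda>n. C * r ^ n) \<longlonglongrightarrow> 0" by (rule tendsto_mult_right_zero)
  have ev: "\<forall>\<^sub>F n in sequentially. norm (sv P (UNIV - {t}) (Suc n) s) \<le> C * r ^ n"
    by (rule always_eventually, rule allI, rule b)
  have z: "(\<lambda>n. sv P (UNIV - {t}) (Suc n) s) \<longlonglongrightarrow> 0"
    by (rule Lim_null_comparison[OF ev l1])
  have "(\<lambda>n. 1 - sv P (UNIV - {t}) (Suc n) s) \<longlonglongrightarrow> 1 - 0"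
    by (rule tendsto_diff[OF tendsto_const z])
  moreover have "(\<Sum>k\<le>n. lay P t k s) = 1 - sv P (UNIV - {t}) (Suc n) s" for n
    using full_identity[of s n] st by linarith
  ultimately have "(\<lambda>n. lay P t n s) sums 1" unfolding sums_def_le by simp
  then have "(\<Sum>n. lay P t n s) = 1" by (rule sums_unique[symmetric])
  moreover have "infsum (walk_prob P) AS = (\<Sum>n. lay P t n s)" by (rule infsumI[OF p_has_sum])
  ultimately show ?thesis by simp
qed

theorem part_b1:
  assumes R: "\<forall>x. (s, x) \<in> E\<^sup>* \<longrightarrow> (x, t) \<in> E\<^sup>*"
  shows "avoid_hitting_cost P w 1 t {} s = hitting_cost P w t s"
  using U_eq[of 1] D_one[OF R] unfolding hitting_cost_def AS_def by simp

theorem part_b2: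
  assumes R: "\<forall>x. (s, x) \<in> E\<^sup>* \<longrightarrow> (x, t) \<in> E\<^sup>*"
  shows "((\<lambda>\<alpha>. avoid_hitting_cost P w \<alpha> t {} s) \<longlongrightarrow> hitting_cost P w t s) (at_left 1)"
proof -
  define N1 where "N1 = infsum (\<lambda>xs. walk_prob P xs * walk_cost w xs) AS"
  define DN where "DN \<alpha> = infsum (\<lambda>xs. walk_prob P xs * \<alpha> powr walk_cost w xs * walk_cost w xs) AS" for \<alpha>
  define DD where "DD \<alpha> = infsum (\<lambda>xs. walk_prob P xs * \<alpha> powr walk_cost w xs) AS" for \<alpha>
  have "((\<lambda>\<alpha>. infsum (\<lambda>xs. walk_prob P xs * \<alpha> powr walk_cost w xs * walk_cost w xs
           - walk_prob P xs * walk_cost w xs) AS) \<longlongrightarrow> 0) (at_left 1)"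
  proof (rule infsum_dom_tendsto0[OF pc_summable])
    show "\<forall>\<^sub>F a in at_left 1. \<forall>x\<in>AS. \<bar>walk_prob P x * a powr walk_cost w x * walk_cost w x
           - walk_prob P x * walk_cost w x\<bar> \<le> walk_prob P x * walk_cost w x"
      using ev_left by (rule eventually_mono) (use N_bounds in \<open>auto simp: abs_le_iff\<close>)
    fix x
    have "((\<lambda>a. walk_prob P x * a powr walk_cost w x * walk_cost w x
           - walk_prob P x * walk_cost w x) \<longlongrightarrow> walk_prob P x * 1 * walk_cost w x
           - walk_prob P x * walk_cost w x) (at_left 1)"
      by (intro tendsto_intros powr_tendsto1)
    then show "((\<lambda>a. walk_prob P x * a powr walk_cost w x * walk_cost w x
           - walk_prob P x * walk_cost w x) \<longlongrightarrow> 0) (at_left 1)" by simp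
  qed
  moreover have "\<forall>\<^sub>F \<alpha> in at_left 1. infsum (\<lambda>xs. walk_prob P xs * \<alpha> powr walk_cost w xs * walk_cost w xs
           - walk_prob P xs * walk_cost w xs) AS = DN \<alpha> - N1"
  proof (rule eventually_mono[OF ev_left])
    fix \<alpha> :: real assume "0 < \<alpha> \<and> \<alpha> \<le> 1"
    then show "infsum (\<lambda>xs. walk_prob P xs * \<alpha> powr walk_cost w xs * walk_cost w xs
           - walk_prob P xs * walk_cost w xs) AS = DN \<alpha> - N1"
      using infsum_diff_real[OF N_summable[of \<alpha>] pc_summable] unfolding DN_def N1_def by simp
  qed
  ultimately have "((\<lambda>\<alpha>. DN \<alpha> - N1) \<longlongrightarrow> 0) (at_left 1)" by (rule tendsto_cong[THEN iffD1, rotated])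
  then have limN: "(DN \<longlongrightarrow> N1) (at_left 1)" by (rule LIM_zero_cancel)
  have "((\<lambda>\<alpha>. infsum (\<lambda>xs. walk_prob P xs * \<alpha> powr walk_cost w xs - walk_prob P xs) AS) \<longlongrightarrow> 0) (at_left 1)"
  proof (rule infsum_dom_tendsto0[OF p_summable])
    show "\<forall>\<^sub>F a in at_left 1. \<forall>x\<in>AS. \<bar>walk_prob P x * a powr walk_cost w x - walk_prob P x\<bar> \<le> walk_prob P x"
      using ev_left by (rule eventually_mono) (use D_bounds in \<open>auto simp: abs_le_iff\<close>)
    fix x
    have "((\<lambda>a. walk_prob P x * a powr walk_cost w x - walk_prob P x) \<longlongrightarrow> walk_prob P x * 1 - walk_prob P x) (at_left 1)"
      by (intro tendsto_intros powr_tendsto1)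
    then show "((\<lambda>a. walk_prob P x * a powr walk_cost w x - walk_prob P x) \<longlongrightarrow> 0) (at_left 1)" by simp
  qed
  moreover have "\<forall>\<^sub>F \<alpha> in at_left 1. infsum (\<lambda>xs. walk_prob P xs * \<alpha> powr walk_cost w xs - walk_prob P xs) AS
      = DD \<alpha> - 1"
  proof (rule eventually_mono[OF ev_left])
    fix \<alpha> :: real assume "0 < \<alpha> \<and> \<alpha> \<le> 1"
    then show "infsum (\<lambda>xs. walk_prob P xs * \<alpha> powr walk_cost w xs - walk_prob P xs) AS = DD \<alpha> - 1"
      using infsum_diff_real[OF D_summable[of \<alpha>] p_summable] D_one[OF R] unfolding DD_def by simp
  qed
  ultimately have "((\<lambda>\<alpha>. DD \<alpha> - 1) \<longlongrightarrow> 0) (at_left 1)" by (rule tendsto_cong[THEN iffD1, rotated])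
  then have limD: "(DD \<longlongrightarrow> 1) (at_left 1)" by (rule LIM_zero_cancel)
  have "((\<lambda>\<alpha>. DN \<alpha> / DD \<alpha>) \<longlongrightarrow> N1 / 1) (at_left 1)"
    by (rule tendsto_divide[OF limN limD]) simp
  moreover have "\<forall>\<^sub>F \<alpha> in at_left 1. avoid_hitting_cost P w \<alpha> t {} s = DN \<alpha> / DD \<alpha>"
    using ev_left by (rule eventually_mono) (auto simp: U_eq DN_def DD_def)
  ultimately have "((\<lambda>\<alpha>. avoid_hitting_cost P w \<alpha> t {} s) \<longlongrightarrow> N1 / 1) (at_left 1)"
    by (rule tendsto_cong[THEN iffD2, rotated])
  then show ?thesis unfolding hitting_cost_def N1_def AS_def by simp
qed

end

context evnet begin

theorem part_a: "((\<lambda>\<alpha>. avoid_hitting_cost P w \<alpha> t {} s) \<longlongrightarrow> shortest_dist E w s t) (at_right 0)"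
proof -
  define L where "L = shortest_dist E w s t"
  obtain x0 where x0: "x0 \<in> AS" "walk_prob P x0 > 0" "walk_cost w x0 = L"
    using x0_ex unfolding L_def by blast
  define p0 where "p0 = walk_prob P x0"
  define f where "f \<alpha> xs = walk_prob P xs * (walk_cost w xs - L) * \<alpha> powr (walk_cost w xs - L)" for \<alpha> xs
  define g where "g xs = walk_prob P xs * (walk_cost w xs - L)" for xs
  define h where "h \<alpha> = infsum (f \<alpha>) AS" for \<alpha>
  have gnn: "xs \<in> AS \<Longrightarrow> g xs \<ge> 0" for xs
  proof (cases "walk_prob P xs > 0")
    case True
    assume "xs \<in> AS"
    then have "L \<le> walk_cost w xs" using L_le True unfolding L_def by blast
    then show ?thesis unfolding g_def using True by simp
  next
    case False then show ?thesis using p_nonneg[of xs] unfolding g_def by simp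
  qed
  have fb: "0 \<le> f \<alpha> xs \<and> f \<alpha> xs \<le> g xs" if "xs \<in> AS" "0 < \<alpha>" "\<alpha> \<le> 1" for xs \<alpha>
  proof (cases "walk_prob P xs > 0")
    case True
    then have cL: "L \<le> walk_cost w xs" using L_le that(1) unfolding L_def by blast
    have "\<alpha> powr (walk_cost w xs - L) \<le> 1 powr (walk_cost w xs - L)"
      using that cL by (intro powr_mono2) auto
    then have "\<alpha> powr (walk_cost w xs - L) \<le> 1" by simp
    moreover have "g xs \<ge> 0" using gnn that(1) .
    ultimately show ?thesis unfolding f_def g_def[symmetric] by (simp add: mult_left_le)
  next
    case False
    then have "walk_prob P xs = 0" using p_nonneg[of xs] by simp
    then show ?thesis unfolding f_def g_def by simp
  qed
  have gs: "g summable_on AS"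
  proof -
    have "(\<lambda>xs. walk_prob P xs * walk_cost w xs - L * walk_prob P xs) summable_on AS"
      by (intro summable_on_diff_real pc_summable summable_on_cmult_right p_summable)
    then show ?thesis unfolding g_def by (simp add: algebra_simps)
  qed
  have fs: "f \<alpha> summable_on AS" if "0 < \<alpha>" "\<alpha> \<le> 1" for \<alpha>
    by (rule summable_on_comparison_test[OF gs]) (use fb that in auto)
  have hlim: "(h \<longlongrightarrow> 0) (at_right 0)"
    unfolding h_def
  proof (rule infsum_dom_tendsto0[OF gs])
    show "\<forall>\<^sub>F a in at_right 0. \<forall>x\<in>AS. \<bar>f a x\<bar> \<le> g x"
      using ev_right by (rule eventually_mono) (use fb in fastforce)
    fix x assume "x \<in> AS"
    show "((\<lambda>a. f a x) \<longlongrightarrow> 0) (at_right 0)"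
    proof (cases "walk_prob P x > 0 \<and> walk_cost w x \<noteq> L")
      case True
      then have pos: "walk_cost w x - L > 0" using L_le \<open>x \<in> AS\<close> unfolding L_def by force
      have "((\<lambda>a::real. a powr (walk_cost w x - L)) \<longlongrightarrow> 0) (at_right 0)"
      proof (rule tendsto_zero_powrI)
        show "((\<lambda>a::real. a) \<longlongrightarrow> 0) (at_right 0)" by (rule tendsto_ident_at)
        show "\<forall>\<^sub>F a in at_right 0. 0 \<le> (a::real)" using ev_right by (rule eventually_mono) auto
      qed (use pos in auto)
      then show ?thesis unfolding f_def by (rule tendsto_mult_right_zero)
    next
      case False
      then have "f a x = 0" for a unfolding f_def using p_nonneg[of x] by auto
      then show ?thesis by simp
    qed
  qed
  have bound: "\<forall>\<^sub>F \<alpha> in at_right 0. norm (avoid_hitting_cost P w \<alpha> t {} s - L) \<le> h \<alpha> / p0"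
    using ev_right
  proof (rule eventually_mono)
    fix \<alpha> :: real assume a: "0 < \<alpha> \<and> \<alpha> \<le> 1"
    define N where "N = infsum (\<lambda>xs. walk_prob P xs * \<alpha> powr walk_cost w xs * walk_cost w xs) AS"
    define D where "D = infsum (\<lambda>xs. walk_prob P xs * \<alpha> powr walk_cost w xs) AS"
    have p0: "p0 > 0" using x0 unfolding p0_def by simp
    have Dge: "p0 * \<alpha> powr L \<le> D" using D_pos[of \<alpha> x0] a x0 unfolding D_def p0_def by simp
    have aL: "\<alpha> powr L > 0" using a by simp
    have Dpos: "D > 0" using Dge p0 aL by (smt (verit) mult_pos_pos)
    have "N - L * D = infsum (\<lambda>xs. walk_prob P xs * \<alpha> powr walk_cost w xs * walk_cost w xs
          - L * (walk_prob P xs * \<alpha> powr walk_cost w xs)) AS"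
      unfolding N_def D_def using a
      by (simp add: infsum_diff_real N_summable D_summable summable_on_cmult_right infsum_cmult_right)
    also have "\<dots> = infsum (\<lambda>xs. \<alpha> powr L * f \<alpha> xs) AS"
    proof (rule infsum_cong)
      fix xs
      have "\<alpha> powr walk_cost w xs = \<alpha> powr L * \<alpha> powr (walk_cost w xs - L)"
        using a by (simp add: powr_add[symmetric])
      then show "walk_prob P xs * \<alpha> powr walk_cost w xs * walk_cost w xs
          - L * (walk_prob P xs * \<alpha> powr walk_cost w xs) = \<alpha> powr L * f \<alpha> xs"
        unfolding f_def by (simp add: algebra_simps)
    qed
    also have "\<dots> = \<alpha> powr L * h \<alpha>" unfolding h_def by (rule infsum_cmult_right) (use fs a in auto)
    finally have NL: "N - L * D = \<alpha> powr L * h \<alpha>" .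
    have h0: "h \<alpha> \<ge> 0" unfolding h_def by (rule infsum_nonneg) (use fb a in auto)
    have U: "avoid_hitting_cost P w \<alpha> t {} s - L = (\<alpha> powr L * h \<alpha>) / D"
      using U_eq[of \<alpha>] a Dpos NL unfolding N_def[symmetric] D_def[symmetric]
      by (simp add: field_simps)
    have "(\<alpha> powr L * h \<alpha>) / D \<le> (\<alpha> powr L * h \<alpha>) / (p0 * \<alpha> powr L)"
      by (rule divide_left_mono) (use Dge h0 aL p0 Dpos in \<open>auto intro: mult_pos_pos\<close>)
    also have "\<dots> = h \<alpha> / p0" using aL by simp
    finally show "norm (avoid_hitting_cost P w \<alpha> t {} s - L) \<le> h \<alpha> / p0"
      using U h0 aL Dpos by simp
  qed
  have "((\<lambda>\<alpha>. h \<alpha> / p0) \<longlongrightarrow> 0) (at_right 0)" using tendsto_divide_zero[OF hlim] by simp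
  then have "((\<lambda>\<alpha>. avoid_hitting_cost P w \<alpha> t {} s - L) \<longlongrightarrow> 0) (at_right 0)"
    by (rule Lim_null_comparison[OF bound])
  then show ?thesis unfolding L_def by (rule LIM_zero_cancel)
qed

end

theorem mainTheorem2:
  fixes P w :: "'a::finite \<Rightarrow> 'a \<Rightarrow> real"
    and E :: "('a \<times> 'a) set"
    and s t :: 'a
  assumes P_nonneg: "\<And>i j. P i j \<ge> 0"
    and P_stoch: "\<And>i. (\<Sum>j\<in>UNIV. P i j) = 1"
    and P_edge: "\<And>i j. P i j > 0 \<longleftrightarrow> (i, j) \<in> E"
    and w_pos: "\<And>i j. (i, j) \<in> E \<Longrightarrow> w i j > 0"
    and st: "s \<noteq> t"
    and path: "\<exists>xs. is_dpath E xs s t"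
  shows "((\<lambda>\<alpha>. avoid_hitting_cost P w \<alpha> t {} s) \<longlongrightarrow> shortest_dist E w s t) (at_right 0)
     \<and> ((\<forall>x. (s, x) \<in> E\<^sup>* \<longrightarrow> (x, t) \<in> E\<^sup>*) \<longrightarrow>
           avoid_hitting_cost P w 1 t {} s = hitting_cost P w t s \<and>
           ((\<lambda>\<alpha>. avoid_hitting_cost P w \<alpha> t {} s) \<longlongrightarrow> hitting_cost P w t s) (at_left 1))
     \<and> (\<forall>\<alpha>1 \<alpha>2. 0 < \<alpha>1 \<and> \<alpha>1 < \<alpha>2 \<and> \<alpha>2 \<le> 1 \<longrightarrow>
           avoid_hitting_cost P w \<alpha>1 t {} s \<le> avoid_hitting_cost P w \<alpha>2 t {} s)"
proof -
  interpret evnet P w E s t by (rule evnet.intro) (use assms in auto)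
  show ?thesis using part_a part_b1 part_b2 part_c by blast
qed

end
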